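(* Let $H$ be a separable Hilbert space, $\mathbb{J}\subseteq\mathbb{Z}$, $\{H_j\}_{j\in\mathbb{J}}$ separable Hilbert spaces and $\Lambda_j\in\mathcal{B}(H,H_j)$ for $j\in\mathbb{J}$, such that $\{\Lambda_j\}_{j\in\mathbb{J}}$ is a g-frame for $H$ with respect to $\{H_j\}_{j\in\mathbb{J}}$. Let $S=\sum_{j\in\mathbb{J}}\Lambda_j^*\Lambda_j$ be its g-frame operator and $\tilde{\Lambda}_j:=\Lambda_jS^{-1}$. For $\mathbb{I}\subseteq\mathbb{J}$ define $S_{\mathbb{I}}f:=\sum_{j\in\mathbb{I}}\Lambda_j^*\tilde{\Lambda}_jf$ for $f\in H$, and let $\mathbb{I}^c=\mathbb{J}\setminus\mathbb{I}$. Then for every $f\in H$, $$\sum_{j\in\mathbb{I}}\langle \tilde{\Lambda}_j f,\Lambda_j f\rangle-\Vert S_{\mathbb{I}}f\Vert^2 =\sum_{j\in\mathbb{I}^c}\overline{\langle \tilde{\Lambda}_j f,\Lambda_j f\rangle}-\Vert S_{\mathbb{I}^c}f\Vert^2.$$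
   Context: A family $\{\Lambda_j\}_{j\in\mathbb{J}}$ with $\Lambda_j\in\mathcal{B}(H,H_j)$ is a g-frame for $H$ with respect to $\{H_j\}$ if there exist $0<A\le B<\infty$ with $A\Vert f\Vert^2\le\sum_{j\in\mathbb{J}}\Vert\Lambda_jf\Vert^2\le B\Vert f\Vert^2$ for all $f\in H$. Its g-frame operator $Sf=\sum_{j}\Lambda_j^*\Lambda_jf$ is bounded, positive and invertible; $\{\tilde{\Lambda}_j\}$ is the canonical dual g-frame. *)

theory Defs
  imports "HOL-Analysis.Analysis"
begin

class complex_inner = real_normed_vector +
  fixes scaleC :: "complex \<Rightarrow> 'a \<Rightarrow> 'a"
    and cinner :: "'a \<Rightarrow> 'a \<Rightarrow> complex"
  assumes scaleC_add_right: "scaleC a (x + y) = scaleC a x + scaleC a y"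
    and scaleC_add_left: "scaleC (a + b) x = scaleC a x + scaleC b x"
    and scaleC_scaleC: "scaleC a (scaleC b x) = scaleC (a * b) x"
    and scaleC_one: "scaleC 1 x = x"
    and scaleR_scaleC: "scaleR r x = scaleC (complex_of_real r) x"
    and cinner_add_left: "cinner (x + y) z = cinner x z + cinner y z"
    and cinner_scaleC_left: "cinner (scaleC a x) y = a * cinner x y"
    and cinner_commute: "cinner y x = cnj (cinner x y)"
    and cinner_self_norm: "cinner x x = complex_of_real ((norm x)\<^sup>2)"

class chilbert_space = complex_inner + complete_space

definition separable_set :: "'a::metric_space set \<Rightarrow> bool" where
  "separable_set S \<longleftrightarrow> (\<exists>D. D \<subseteq> S \<and> countable D \<and> S \<subseteq> closure D)"

definition closed_csubspace :: "'a::complex_inner set \<Rightarrow> bool" where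
  "closed_csubspace S \<longleftrightarrow> closed S \<and> 0 \<in> S \<and>
     (\<forall>x\<in>S. \<forall>y\<in>S. x + y \<in> S) \<and> (\<forall>c. \<forall>x\<in>S. scaleC c x \<in> S)"

definition bounded_clinear_op :: "('a::complex_inner \<Rightarrow> 'b::complex_inner) \<Rightarrow> bool" where
  "bounded_clinear_op T \<longleftrightarrow> bounded_linear T \<and> (\<forall>c x. T (scaleC c x) = scaleC c (T x))"

definition cadjoint :: "('a::complex_inner \<Rightarrow> 'b::complex_inner) \<Rightarrow> 'b \<Rightarrow> 'a" where
  "cadjoint T = (\<lambda>y. THE x. \<forall>v. cinner (T v) y = cinner v x)"

definition g_frame :: "int set \<Rightarrow> (int \<Rightarrow> 'a::complex_inner \<Rightarrow> 'b::complex_inner) \<Rightarrow> bool" where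
  "g_frame J \<Lambda> \<longleftrightarrow> (\<exists>A B. 0 < A \<and> A \<le> B \<and>
     (\<forall>f. (\<lambda>j. (norm (\<Lambda> j f))\<^sup>2) summable_on J \<and>
          A * (norm f)\<^sup>2 \<le> (\<Sum>\<^sub>\<infinity>j\<in>J. (norm (\<Lambda> j f))\<^sup>2) \<and>
          (\<Sum>\<^sub>\<infinity>j\<in>J. (norm (\<Lambda> j f))\<^sup>2) \<le> B * (norm f)\<^sup>2))"

definition g_frame_op :: "int set \<Rightarrow> (int \<Rightarrow> 'a::complex_inner \<Rightarrow> 'b::complex_inner) \<Rightarrow> 'a \<Rightarrow> 'a" where
  "g_frame_op J \<Lambda> f = (\<Sum>\<^sub>\<infinity>j\<in>J. cadjoint (\<Lambda> j) (\<Lambda> j f))"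

definition g_dual :: "int set \<Rightarrow> (int \<Rightarrow> 'a::complex_inner \<Rightarrow> 'b::complex_inner) \<Rightarrow> int \<Rightarrow> 'a \<Rightarrow> 'b" where
  "g_dual J \<Lambda> j = \<Lambda> j \<circ> inv (g_frame_op J \<Lambda>)"

definition g_partial_op :: "int set \<Rightarrow> (int \<Rightarrow> 'a::complex_inner \<Rightarrow> 'b::complex_inner) \<Rightarrow> int set \<Rightarrow> 'a \<Rightarrow> 'a" where
  "g_partial_op J \<Lambda> I f = (\<Sum>\<^sub>\<infinity>j\<in>I. cadjoint (\<Lambda> j) (g_dual J \<Lambda> j f))"

end

theory Submission
  imports Defs
begin

lemma cinner_add_right: "cinner (x::'a::complex_inner) (y + z) = cinner x y + cinner x z"
  by (metis cinner_commute cinner_add_left complex_cnj_add)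
lemma cinner_scaleC_right: "cinner (x::'a::complex_inner) (scaleC a y) = cnj a * cinner x y"
  by (metis cinner_commute cinner_scaleC_left complex_cnj_mult complex_cnj_cnj)
lemma cinner_zero_left[simp]: "cinner (0::'a::complex_inner) y = 0"
  using cinner_add_left[of "0::'a" 0 y] by simp
lemma cinner_zero_right[simp]: "cinner (x::'a::complex_inner) 0 = 0"
  using cinner_add_right[of x "0::'a" 0] by simp
lemma cinner_minus_left: "cinner (- x::'a::complex_inner) y = - cinner x y"
proof -
  have "cinner x y + cinner (-x) y = 0" using cinner_add_left[of x "-x" y] by simp
  then show ?thesis by (simp add: add_eq_0_iff)
qed
lemma cinner_minus_right: "cinner (x::'a::complex_inner) (- y) = - cinner x y"
proof -
  have "cinner x y + cinner x (-y) = 0" using cinner_add_right[of x y "-y"] by simp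
  then show ?thesis by (simp add: add_eq_0_iff)
qed
lemma cinner_diff_left: "cinner (x - y::'a::complex_inner) z = cinner x z - cinner y z"
  using cinner_add_left[of x "-y" z] cinner_minus_left[of y z] by simp
lemma cinner_diff_right: "cinner (x::'a::complex_inner) (y - z) = cinner x y - cinner x z"
  using cinner_add_right[of x y "-z"] cinner_minus_right[of x z] by simp
lemma cinner_scaleR_left: "cinner (r *\<^sub>R x::'a::complex_inner) y = of_real r * cinner x y"
  by (simp add: scaleR_scaleC cinner_scaleC_left)
lemma cinner_scaleR_right: "cinner (x::'a::complex_inner) (r *\<^sub>R y) = of_real r * cinner x y"
  by (simp add: scaleR_scaleC cinner_scaleC_right)
lemma scaleC_zero_left[simp]: "scaleC 0 (x::'a::complex_inner) = 0"
  by (metis scaleR_scaleC scaleR_zero_left of_real_0)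
lemma scaleC_zero_right[simp]: "scaleC a (0::'a::complex_inner) = 0"
  using scaleC_add_right[of a "0::'a" 0] by simp
lemma scaleC_minus_right: "scaleC a (- x::'a::complex_inner) = - scaleC a x"
proof -
  have "scaleC a x + scaleC a (-x) = 0" using scaleC_add_right[of a x "-x"] by simp
  then show ?thesis by (simp add: add_eq_0_iff)
qed
lemma scaleC_diff_right: "scaleC a (x - y::'a::complex_inner) = scaleC a x - scaleC a y"
  using scaleC_add_right[of a x "-y"] scaleC_minus_right[of a y] by simp
lemma scaleC_scaleR_comm: "scaleC a (r *\<^sub>R x::'a::complex_inner) = r *\<^sub>R scaleC a x"
  by (simp add: scaleR_scaleC scaleC_scaleC mult.commute)
lemma cinner_self: "cinner (x::'a::complex_inner) x = complex_of_real ((norm x)\<^sup>2)"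
  by (rule cinner_self_norm)
lemma cinner_ext:
  assumes "\<And>v. cinner v (x::'a::complex_inner) = cinner v y" shows "x = y"
proof -
  have "cinner (x - y) (x - y) = 0" using assms[of "x-y"] by (simp add: cinner_diff_right)
  then show ?thesis by (simp add: cinner_self)
qed
lemma norm_scaleC: "norm (scaleC a (x::'a::complex_inner)) = cmod a * norm x"
proof -
  have "cinner (scaleC a x) (scaleC a x) = a * cnj a * cinner x x"
    by (simp add: cinner_scaleC_left cinner_scaleC_right)
  also have "a * cnj a = complex_of_real ((cmod a)\<^sup>2)" by (metis complex_norm_square)
  finally have "complex_of_real ((norm (scaleC a x))\<^sup>2) = complex_of_real (((cmod a) * norm x)\<^sup>2)"
    unfolding cinner_self by (simp add: power_mult_distrib)
  then have "(norm (scaleC a x))\<^sup>2 = ((cmod a) * norm x)\<^sup>2"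
    using of_real_eq_iff by blast
  then show ?thesis by (simp add: power2_eq_iff_nonneg)
qed

lemma cauchy_schwarz_c: "cmod (cinner (x::'a::complex_inner) y) \<le> norm x * norm y"
proof (cases "y = 0")
  case True then show ?thesis by simp
next
  case False
  define a where "a = cinner x y"
  define n where "n = (norm y)\<^sup>2"
  have n: "n > 0" using False by (simp add: n_def)
  define t where "t = a / complex_of_real n"
  have "cinner (x - scaleC t y) (x - scaleC t y)
      = cinner x x - cnj t * a - t * cnj a + t * cnj t * cinner y y"
  proof -
    have yx: "cinner y x = cnj a" unfolding a_def by (rule cinner_commute)
    have "cinner (x - scaleC t y) (x - scaleC t y) = cinner x (x - scaleC t y) - cinner (scaleC t y) (x - scaleC t y)"
      by (rule cinner_diff_left)
    also have "\<dots> = (cinner x x - cnj t * a) - (t * cnj a - t * (cnj t * cinner y y))"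
      unfolding cinner_diff_right cinner_scaleC_right cinner_scaleC_left yx a_def by (simp add: algebra_simps)
    finally show ?thesis by (simp add: algebra_simps)
  qed
  also have "\<dots> = complex_of_real ((norm x)\<^sup>2 - (cmod a)\<^sup>2 / n)"
  proof -
    have nn: "complex_of_real n \<noteq> 0" using n by simp
    have ct: "cnj t = cnj a / complex_of_real n" unfolding t_def by simp
    have aa: "a * cnj a = complex_of_real ((cmod a)\<^sup>2)" by (metis complex_norm_square)
    have e1: "cnj t * a = complex_of_real ((cmod a)\<^sup>2 / n)"
      unfolding ct using aa by (simp add: mult.commute)
    have e2: "t * cnj a = complex_of_real ((cmod a)\<^sup>2 / n)"
      unfolding t_def using aa by simp
    have e3: "t * cnj t * cinner y y = complex_of_real ((cmod a)\<^sup>2 / n)"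
      unfolding cinner_self n_def[symmetric] ct unfolding t_def using aa nn by simp
    show ?thesis unfolding e1 e2 e3 unfolding cinner_self by simp
  qed
  finally have "complex_of_real ((norm (x - scaleC t y))\<^sup>2) = complex_of_real ((norm x)\<^sup>2 - (cmod a)\<^sup>2 / n)"
    unfolding cinner_self .
  then have "(norm (x - scaleC t y))\<^sup>2 = (norm x)\<^sup>2 - (cmod a)\<^sup>2 / n"
    using of_real_eq_iff by blast
  then have "(cmod a)\<^sup>2 / n \<le> (norm x)\<^sup>2" by (metis diff_ge_0_iff_ge zero_le_power2)
  then have "(cmod a)\<^sup>2 \<le> (norm x * norm y)\<^sup>2" using n by (simp add: n_def field_simps power_mult_distrib)
  then show ?thesis unfolding a_def by (simp add: power2_le_iff_abs_le)
qed


lemma bounded_linear_cinner_left: "bounded_linear (\<lambda>x::'a::complex_inner. cinner x y)"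
proof (rule bounded_linear_intro[where K="norm y"])
  show "cinner (a + b) y = cinner a y + cinner b y" for a b by (rule cinner_add_left)
  show "cinner (r *\<^sub>R a) y = r *\<^sub>R cinner a y" for r a by (simp add: cinner_scaleR_left scaleR_conv_of_real)
  show "norm (cinner a y) \<le> norm a * norm y" for a using cauchy_schwarz_c[of a y] by simp
qed

lemma bounded_linear_cinner_right: "bounded_linear (\<lambda>x::'a::complex_inner. cinner y x)"
proof (rule bounded_linear_intro[where K="norm y"])
  show "cinner y (a + b) = cinner y a + cinner y b" for a b by (rule cinner_add_right)
  show "cinner y (r *\<^sub>R a) = r *\<^sub>R cinner y a" for r a by (simp add: cinner_scaleR_right scaleR_conv_of_real)
  show "norm (cinner y a) \<le> norm a * norm y" for a using cauchy_schwarz_c[of y a] by (simp add: mult.commute)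
qed

lemma bounded_linear_scaleC: "bounded_linear (scaleC c :: 'a::complex_inner \<Rightarrow> 'a)"
proof (rule bounded_linear_intro[where K="cmod c"])
  show "scaleC c (a + b) = scaleC c a + scaleC c b" for a b by (rule scaleC_add_right)
  show "scaleC c (r *\<^sub>R a) = r *\<^sub>R scaleC c a" for r a by (rule scaleC_scaleR_comm)
  show "norm (scaleC c a) \<le> norm a * cmod c" for a by (simp add: norm_scaleC mult.commute)
qed

lemma parallelogram_c:
  "(norm (a - b::'a::complex_inner))\<^sup>2 = 2 * (norm a)\<^sup>2 + 2 * (norm b)\<^sup>2 - (norm (a + b))\<^sup>2"
proof -
  have "cinner (a - b) (a - b) = 2 * cinner a a + 2 * cinner b b - cinner (a + b) (a + b)"
    by (simp add: cinner_diff_left cinner_diff_right cinner_add_left cinner_add_right algebra_simps)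
  then have "complex_of_real ((norm (a - b))\<^sup>2) = complex_of_real (2 * (norm a)\<^sup>2 + 2 * (norm b)\<^sup>2 - (norm (a + b))\<^sup>2)"
    unfolding cinner_self by simp
  then show ?thesis using of_real_eq_iff by blast
qed

lemma min_norm_exists:
  fixes C :: "'a::chilbert_space set"
  assumes cl: "closed C" and ne: "C \<noteq> {}" and mid: "\<And>x y. x\<in>C \<Longrightarrow> y\<in>C \<Longrightarrow> (1/2) *\<^sub>R (x+y) \<in> C"
  shows "\<exists>z\<in>C. \<forall>w\<in>C. norm z \<le> norm w"
proof -
  define d where "d = Inf (norm ` C)"
  have bdd: "bdd_below (norm ` C)" by (rule bdd_belowI[where m=0]) auto
  have dle: "d \<le> norm w" if "w \<in> C" for w unfolding d_def using bdd that by (simp add: cInf_lower)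
  have d0: "d \<ge> 0" unfolding d_def using ne by (intro cInf_greatest) auto
  define e where "e n = inverse (real (Suc n))" for n
  have e0: "0 < e n" "e n \<le> 1" for n unfolding e_def by (auto simp: inverse_le_1_iff)
  have "\<exists>v\<in>C. norm v < d + e n" for n
  proof -
    have "Inf (norm ` C) < d + e n" using e0[of n] unfolding d_def by simp
    then obtain r where "r \<in> norm ` C" "r < d + e n" using cInf_lessD[of "norm ` C"] ne by blast
    then show ?thesis by auto
  qed
  then obtain v where v: "\<And>n. v n \<in> C" "\<And>n. norm (v n) < d + e n" by metis
  have Dn: "(norm (v n))\<^sup>2 - d\<^sup>2 \<le> (2*d+1) * e n" for n
  proof -
    have "(norm (v n))\<^sup>2 \<le> (d + e n)\<^sup>2" using v(2)[of n] d0 by (simp add: power_mono)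
    also have "\<dots> = d\<^sup>2 + 2*d*e n + e n * e n" by (simp add: power2_eq_square algebra_simps)
    also have "e n * e n \<le> e n" using e0[of n] by (simp add: mult_le_cancel_right1)
    finally show ?thesis by (simp add: algebra_simps)
  qed
  have pair: "(norm (v n - v m))\<^sup>2 \<le> 2*(2*d+1) * (e n + e m)" for n m
  proof -
    have "2 * d \<le> norm (v n + v m)"
      using dle[OF mid[OF v(1)[of n] v(1)[of m]]] by simp
    then have "(2 * d)\<^sup>2 \<le> (norm (v n + v m))\<^sup>2" using d0 by (intro power_mono) auto
    then have "4 * d\<^sup>2 \<le> (norm (v n + v m))\<^sup>2" by (simp add: power_mult_distrib)
    then show ?thesis unfolding parallelogram_c using Dn[of n] Dn[of m] by (simp add: algebra_simps)
  qed
  have "Cauchy v"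
  proof (rule CauchyI)
    fix \<epsilon> :: real assume "0 < \<epsilon>"
    obtain N where N: "4*(2*d+1) / \<epsilon>\<^sup>2 < real N" using reals_Archimedean2 by blast
    have eN: "e n \<le> inverse (real (Suc N))" if "n \<ge> N" for n
      unfolding e_def using that by (simp add: le_imp_inverse_le)
    have ep: "0 < \<epsilon>\<^sup>2" using \<open>0 < \<epsilon>\<close> by simp
    have "4*(2*d+1) / \<epsilon>\<^sup>2 < real (Suc N)" using N by simp
    then have "4*(2*d+1) < real (Suc N) * \<epsilon>\<^sup>2" using ep by (simp add: pos_divide_less_eq)
    then have "4*(2*d+1) / real (Suc N) < \<epsilon>\<^sup>2" by (simp add: pos_divide_less_eq mult.commute)
    then have key: "4*(2*d+1) * inverse (real (Suc N)) < \<epsilon>\<^sup>2"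
      by (simp add: divide_inverse)
    show "\<exists>M. \<forall>m\<ge>M. \<forall>n\<ge>M. norm (v m - v n) < \<epsilon>"
    proof (intro exI allI impI)
      fix m n assume "N \<le> m" "N \<le> n"
      have "(norm (v m - v n))\<^sup>2 \<le> 2*(2*d+1) * (e m + e n)" by (rule pair)
      also have "\<dots> \<le> 2*(2*d+1) * (2 * inverse (real (Suc N)))"
        using eN[OF \<open>N \<le> m\<close>] eN[OF \<open>N \<le> n\<close>] d0 by (intro mult_left_mono) auto
      also have "\<dots> = 4*(2*d+1) * inverse (real (Suc N))" by (simp add: algebra_simps)
      also have "\<dots> < \<epsilon>\<^sup>2" by (rule key)
      finally show "norm (v m - v n) < \<epsilon>" using \<open>0 < \<epsilon>\<close> by (simp add: power_less_imp_less_base)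
    qed
  qed
  then obtain z where z: "v \<longlonglongrightarrow> z" using Cauchy_convergent convergent_def by blast
  have zC: "z \<in> C" using closed_sequentially[OF cl] v(1) z by blast
  have "norm z \<le> d"
  proof (rule tendsto_le[OF trivial_limit_sequentially])
    show "(\<lambda>n. norm (v n)) \<longlonglongrightarrow> norm z" using z by (rule tendsto_norm)
    have "e \<longlonglongrightarrow> 0" unfolding e_def by (rule LIMSEQ_inverse_real_of_nat)
    then show "(\<lambda>n. d + e n) \<longlonglongrightarrow> d" using tendsto_add[of "\<lambda>_. d" d sequentially e 0] by simp
    show "\<forall>\<^sub>F n in sequentially. norm (v n) \<le> d + e n" using v(2) by (simp add: less_imp_le)
  qed
  then show ?thesis using zC dle by force
qed


lemma min_orth:
  fixes z n :: "'a::complex_inner"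
  assumes zmin: "\<And>t. norm z \<le> norm (z + scaleC t n)"
  shows "cinner n z = 0"
proof -
  define a where "a = cinner n z"
  define q where "q = (cmod a)\<^sup>2"
  define s where "s = 1 / ((norm n)\<^sup>2 + 1)"
  have s0: "s > 0" unfolding s_def by (simp add: add_nonneg_pos)
  have p: "0 < 1 + (norm n)\<^sup>2" by (simp add: add_pos_nonneg)
  have s1: "s * (norm n)\<^sup>2 < 1" unfolding s_def using p by (simp add: divide_less_eq)
  define t where "t = - complex_of_real s * cnj a"
  have aa: "a * cnj a = complex_of_real q" unfolding q_def by (metis complex_norm_square)
  have zn: "cinner z n = cnj a" unfolding a_def by (rule cinner_commute)
  have "cinner (z + scaleC t n) (z + scaleC t n)
      = cinner z z + cnj t * cinner z n + t * cinner n z + t * (cnj t * cinner n n)"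
    by (simp add: cinner_add_left cinner_add_right cinner_scaleC_left cinner_scaleC_right algebra_simps)
  also have "\<dots> = cinner z z + complex_of_real (- 2 * s * q + s * s * q * (norm n)\<^sup>2)"
  proof -
    have c1: "cnj t * cinner z n = - complex_of_real (s * q)"
      unfolding zn t_def using aa by (simp add: algebra_simps)
    have c2: "t * cinner n z = - complex_of_real (s * q)"
      unfolding a_def[symmetric] t_def using aa by (simp add: algebra_simps)
    have c3: "t * (cnj t * cinner n n) = complex_of_real (s * s * q * (norm n)\<^sup>2)"
      unfolding t_def cinner_self using aa by (simp add: algebra_simps)
    show ?thesis unfolding c1 c2 c3 by (simp add: algebra_simps)
  qed
  finally have E: "(norm (z + scaleC t n))\<^sup>2 = (norm z)\<^sup>2 + (- 2 * s * q + s * s * q * (norm n)\<^sup>2)"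
    unfolding cinner_self by (metis of_real_add of_real_eq_iff)
  have E2: "s * q * (s * (norm n)\<^sup>2 - 2) = (norm (z + scaleC t n))\<^sup>2 - (norm z)\<^sup>2"
    unfolding E by (simp add: algebra_simps)
  have "(norm z)\<^sup>2 \<le> (norm (z + scaleC t n))\<^sup>2" using zmin[of t] by (intro power_mono) auto
  then have "0 \<le> s * q * (s * (norm n)\<^sup>2 - 2)" unfolding E2 by linarith
  moreover have "q \<ge> 0" unfolding q_def by simp
  ultimately have "q = 0" using s0 s1
    by (smt (verit) mult_pos_pos mult_pos_neg zero_less_mult_iff)
  then show ?thesis unfolding q_def a_def by simp
qed

lemma riesz_c:
  fixes \<phi> :: "'a::chilbert_space \<Rightarrow> complex"
  assumes bl: "bounded_linear \<phi>" and hom: "\<And>c x. \<phi> (scaleC c x) = c * \<phi> x"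
  shows "\<exists>x. \<forall>v. \<phi> v = cinner v x"
proof (cases "\<forall>v. \<phi> v = 0")
  case True then show ?thesis by (intro exI[of _ 0]) simp
next
  case False
  then obtain u where u: "\<phi> u \<noteq> 0" by blast
  interpret bounded_linear \<phi> by fact
  define C where "C = {v. \<phi> v = 1}"
  have "scaleC (1 / \<phi> u) u \<in> C" unfolding C_def using u by (simp add: hom)
  then have ne: "C \<noteq> {}" by blast
  have cl: "closed C" unfolding C_def by (intro closed_Collect_eq continuous_intros) (simp add: continuous_on)
  have mid: "(1/2) *\<^sub>R (x+y) \<in> C" if "x\<in>C" "y\<in>C" for x y
    using that unfolding C_def by (simp add: scale add scaleR_conv_of_real)
  obtain z where zC: "z \<in> C" and zmin: "\<And>w. w\<in>C \<Longrightarrow> norm z \<le> norm w"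
    using min_norm_exists[OF cl ne mid] by blast
  have orth: "cinner n z = 0" if "\<phi> n = 0" for n
  proof (rule min_orth)
    show "norm z \<le> norm (z + scaleC t n)" for t
      using zC that by (intro zmin) (simp add: C_def add hom)
  qed
  have z1: "\<phi> z = 1" using zC by (simp add: C_def)
  then have "z \<noteq> 0" using zero by auto
  then have nz: "(norm z)\<^sup>2 \<noteq> 0" by simp
  show ?thesis
  proof (intro exI allI)
    fix v
    have "\<phi> (v - scaleC (\<phi> v) z) = 0" by (simp add: diff hom z1)
    then have "cinner (v - scaleC (\<phi> v) z) z = 0" by (rule orth)
    then have "cinner v z = \<phi> v * complex_of_real ((norm z)\<^sup>2)"
      by (simp add: cinner_diff_left cinner_scaleC_left cinner_self)
    then show "\<phi> v = cinner v (scaleC (complex_of_real (1 / (norm z)\<^sup>2)) z)"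
      using nz by (simp add: cinner_scaleC_right field_simps)
  qed
qed

lemma cadjoint_prop:
  fixes T :: "'a::chilbert_space \<Rightarrow> 'b::complex_inner"
  assumes "bounded_clinear_op T"
  shows "cinner (T v) y = cinner v (cadjoint T y)"
proof -
  have blT: "bounded_linear T" and homT: "\<And>c x. T (scaleC c x) = scaleC c (T x)"
    using assms unfolding bounded_clinear_op_def by auto
  have "bounded_linear (\<lambda>v. cinner (T v) y)"
    using bounded_linear_compose[OF bounded_linear_cinner_left blT] by simp
  moreover have "cinner (T (scaleC c x)) y = c * cinner (T x) y" for c x
    by (simp add: homT cinner_scaleC_left)
  ultimately obtain x where x: "\<And>v. cinner (T v) y = cinner v x"
    using riesz_c[of "\<lambda>v. cinner (T v) y"] by blast
  have "(THE x. \<forall>v. cinner (T v) y = cinner v x) = x"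
  proof (rule the_equality)
    show "\<forall>v. cinner (T v) y = cinner v x" using x by blast
    show "\<forall>v. cinner (T v) y = cinner v x' \<Longrightarrow> x' = x" for x'
      by (rule cinner_ext) (simp add: x)
  qed
  then show ?thesis unfolding cadjoint_def using x by simp
qed


lemma summable_control:
  fixes f :: "'i \<Rightarrow> 'a::{real_normed_vector, complete_space}" and g :: "'i \<Rightarrow> real"
  assumes gs: "g summable_on K" and g0: "\<And>x. x \<in> K \<Longrightarrow> 0 \<le> g x" and c0: "c > 0"
    and ctrl: "\<And>F. finite F \<Longrightarrow> F \<subseteq> K \<Longrightarrow> norm (sum f F) \<le> c * sqrt (sum g F)"
  shows "f summable_on K"
proof -
  define L where "L = infsum g K"
  have lim: "(sum g \<longlongrightarrow> L) (finite_subsets_at_top K)"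
    using gs unfolding L_def by (simp add: has_sum_def[symmetric])
  have "\<exists>P. eventually P (finite_subsets_at_top K) \<and>
              (\<forall>F F'. P F \<and> P F' \<longrightarrow> dist (sum f F) (sum f F') < e)" if "e>0" for e
  proof -
    define \<delta> where "\<delta> = e / (2 * c)"
    define d P where "d = \<delta>\<^sup>2 / 2" and "P F \<longleftrightarrow> finite F \<and> F \<subseteq> K \<and> dist (sum g F) L < d" for F
    have "\<delta> > 0" using that c0 by (simp add: \<delta>_def)
    then have "d > 0" by (simp add: d_def)
    have ev_P: "eventually P (finite_subsets_at_top K)"
      using lim
      by (auto simp add: P_def[abs_def] \<open>0 < d\<close> eventually_conj_iff eventually_finite_subsets_at_top_weakI tendsto_iff)
    moreover have "dist (sum f F1) (sum f F2) < e" if "P F1" and "P F2" for F1 F2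
    proof -
      from ev_P
      obtain F' where "finite F'" and "F' \<subseteq> K" and P_sup_F': "finite F \<and> F \<supseteq> F' \<and> F \<subseteq> K \<Longrightarrow> P F" for F
        by atomize_elim (simp add: eventually_finite_subsets_at_top)
      define F where "F = F' \<union> F1 \<union> F2"
      have "finite F" and "F \<subseteq> K"
        using F_def P_def[abs_def] that \<open>finite F'\<close> \<open>F' \<subseteq> K\<close> by auto
      have dist_F: "dist (sum g F) L < d"
        by (metis F_def \<open>F \<subseteq> K\<close> P_def P_sup_F' \<open>finite F\<close> le_supE order_refl)
      have dist_F_subset: "dist (sum f F) (sum f G) < e/2" if G: "G \<subseteq> F" "P G" for G
      proof -
        have "dist (sum f F) (sum f G) = norm (sum f (F-G))"
          unfolding dist_norm using \<open>finite F\<close> G by (subst sum_diff) auto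
        also have "\<dots> \<le> c * sqrt (sum g (F-G))"
          using \<open>finite F\<close> \<open>F \<subseteq> K\<close> by (intro ctrl) auto
        also have "sum g (F-G) = sum g F - sum g G"
          using \<open>finite F\<close> G by (subst sum_diff) auto
        also have "sum g F - sum g G < 2 * d"
          using dist_F G unfolding P_def dist_real_def by linarith
        then have "sqrt (sum g F - sum g G) < sqrt (2 * d)" by (rule real_sqrt_less_mono)
        then have "c * sqrt (sum g F - sum g G) < c * sqrt (2 * d)" using c0 by simp
        also have "sqrt (2 * d) = \<delta>" using \<open>\<delta> > 0\<close> by (simp add: d_def)
        also have "c * \<delta> = e / 2" using c0 by (simp add: \<delta>_def)
        finally show ?thesis .
      qed
      have "dist (sum f F1) (sum f F2) \<le> dist (sum f F) (sum f F1) + dist (sum f F) (sum f F2)"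
        by (rule dist_triangle3)
      also have "\<dots> < e/2 + e/2"
        by (intro add_strict_mono dist_F_subset that) (auto simp: F_def)
      finally show ?thesis by simp
    qed
    ultimately show ?thesis by blast
  qed
  then have "cauchy_filter (filtermap (sum f) (finite_subsets_at_top K))"
    by (simp add: cauchy_filter_metric_filtermap)
  moreover have "complete (UNIV::'a set)"
    by (meson Cauchy_convergent UNIV_I complete_def convergent_def)
  ultimately obtain L' where "(sum f \<longlongrightarrow> L') (finite_subsets_at_top K)"
    using complete_uniform[where S=UNIV] by (force simp add: filterlim_def)
  then show ?thesis
    using summable_on_def has_sum_def by blast
qed


lemma cinner_sum_left: "cinner (sum g F) (y::'a::complex_inner) = (\<Sum>j\<in>F. cinner (g j) y)"
  by (induct F rule: infinite_finite_induct) (simp_all add: cinner_add_left)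

lemma half_mid: "(1/2) *\<^sub>R ((y - p) + (y - q)) = y - (1/2) *\<^sub>R (p + q::'a::real_vector)"
proof -
  have "(y - p) + (y - q) = 2 *\<^sub>R y - (p + q)" by (simp add: scaleR_2 algebra_simps)
  then have "(1/2) *\<^sub>R ((y - p) + (y - q)) = (1/2) *\<^sub>R (2 *\<^sub>R y) - (1/2) *\<^sub>R (p + q)"
    by (simp only: scaleR_diff_right)
  then show ?thesis by simp
qed

locale gfr =
  fixes J :: "int set" and L :: "int \<Rightarrow> 'a::chilbert_space \<Rightarrow> 'b::chilbert_space" and A B :: real
  assumes bco: "\<And>j. j\<in>J \<Longrightarrow> bounded_clinear_op (L j)"
    and A0: "0 < A" and AB: "A \<le> B"
    and fr: "\<And>f. (\<lambda>j. (norm (L j f))\<^sup>2) summable_on J \<and>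
          A * (norm f)\<^sup>2 \<le> (\<Sum>\<^sub>\<infinity>j\<in>J. (norm (L j f))\<^sup>2) \<and>
          (\<Sum>\<^sub>\<infinity>j\<in>J. (norm (L j f))\<^sup>2) \<le> B * (norm f)\<^sup>2"
begin

lemma B0: "0 < B" using A0 AB by simp

lemma adj1: "j\<in>J \<Longrightarrow> cinner (L j v) y = cinner v (cadjoint (L j) y)"
  by (rule cadjoint_prop[OF bco])

lemma adj2: "j\<in>J \<Longrightarrow> cinner (cadjoint (L j) y) v = cinner y (L j v)"
  by (metis adj1 cinner_commute)

lemma L_add: "j\<in>J \<Longrightarrow> L j (x + y) = L j x + L j y"
  using bco unfolding bounded_clinear_op_def by (meson bounded_linear.axioms(1) linear_add)

lemma L_diff: "j\<in>J \<Longrightarrow> L j (x - y) = L j x - L j y"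
  using bco unfolding bounded_clinear_op_def by (meson bounded_linear.axioms(1) linear_diff)

lemma L_scaleC: "j\<in>J \<Longrightarrow> L j (scaleC c x) = scaleC c (L j x)"
  using bco unfolding bounded_clinear_op_def by blast

lemma Ls_add: "j\<in>J \<Longrightarrow> cadjoint (L j) (x + y) = cadjoint (L j) x + cadjoint (L j) y"
  by (rule cinner_ext) (simp add: adj1[symmetric] cinner_add_right)

lemma Ls_scaleC: "j\<in>J \<Longrightarrow> cadjoint (L j) (scaleC c x) = scaleC c (cadjoint (L j) x)"
  by (rule cinner_ext) (simp add: adj1[symmetric] cinner_scaleC_right)

lemma fsum_le: "finite F \<Longrightarrow> F \<subseteq> J \<Longrightarrow> (\<Sum>j\<in>F. (norm (L j f))\<^sup>2) \<le> B * (norm f)\<^sup>2"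
  using finite_sum_le_infsum[of "\<lambda>j. (norm (L j f))\<^sup>2" J F] fr[of f] by force

lemma ctrl:
  assumes "finite F" "F \<subseteq> J"
  shows "norm (\<Sum>j\<in>F. cadjoint (L j) (L j f)) \<le> sqrt B * sqrt (\<Sum>j\<in>F. (norm (L j f))\<^sup>2)"
proof -
  define h where "h = (\<Sum>j\<in>F. cadjoint (L j) (L j f))"
  have "cinner h h = (\<Sum>j\<in>F. cinner (cadjoint (L j) (L j f)) h)"
    unfolding h_def[symmetric] by (subst (1) h_def) (rule cinner_sum_left)
  also have "\<dots> = (\<Sum>j\<in>F. cinner (L j f) (L j h))"
    using assms(2) by (intro sum.cong) (auto simp: adj2)
  finally have hh: "cinner h h = (\<Sum>j\<in>F. cinner (L j f) (L j h))" .
  have "(norm h)\<^sup>2 = cmod (cinner h h)" unfolding cinner_self norm_of_real by simp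
  also have "\<dots> \<le> (\<Sum>j\<in>F. cmod (cinner (L j f) (L j h)))" unfolding hh by (rule norm_sum)
  also have "\<dots> \<le> (\<Sum>j\<in>F. norm (L j f) * norm (L j h))" by (intro sum_mono cauchy_schwarz_c)
  also have "\<dots> \<le> sqrt (\<Sum>j\<in>F. (norm (L j f))\<^sup>2) * sqrt (\<Sum>j\<in>F. (norm (L j h))\<^sup>2)"
    unfolding real_sqrt_mult[symmetric] by (intro real_le_rsqrt Cauchy_Schwarz_ineq_sum)
  finally have c1: "(norm h)\<^sup>2 \<le> sqrt (\<Sum>j\<in>F. (norm (L j f))\<^sup>2) * sqrt (\<Sum>j\<in>F. (norm (L j h))\<^sup>2)" .
  have "sqrt (\<Sum>j\<in>F. (norm (L j h))\<^sup>2) \<le> sqrt (B * (norm h)\<^sup>2)"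
    using fsum_le[OF assms] by simp
  also have "sqrt (B * (norm h)\<^sup>2) = sqrt B * norm h" by (simp add: real_sqrt_mult)
  finally have c2: "sqrt (\<Sum>j\<in>F. (norm (L j h))\<^sup>2) \<le> sqrt B * norm h" .
  have *: "(norm h)\<^sup>2 \<le> sqrt (\<Sum>j\<in>F. (norm (L j f))\<^sup>2) * (sqrt B * norm h)"
  proof -
    have "0 \<le> (\<Sum>j\<in>F. (norm (L j f))\<^sup>2)" by (simp add: sum_nonneg)
    then show ?thesis using c1 mult_left_mono[OF c2, of "sqrt (\<Sum>j\<in>F. (norm (L j f))\<^sup>2)"] by simp
  qed
  show ?thesis
  proof (cases "h = 0")
    case True then show ?thesis unfolding h_def[symmetric] using B0 by (simp add: sum_nonneg)
  next
    case False
    then have "norm h > 0" by simp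
    with * have "norm h \<le> sqrt (\<Sum>j\<in>F. (norm (L j f))\<^sup>2) * sqrt B"
      by (simp add: power2_eq_square mult.assoc[symmetric])
    then show ?thesis unfolding h_def[symmetric] by (simp add: mult.commute)
  qed
qed

lemma summ: "K \<subseteq> J \<Longrightarrow> (\<lambda>j. cadjoint (L j) (L j f)) summable_on K"
proof (rule summable_control[where g="\<lambda>j. (norm (L j f))\<^sup>2" and c="sqrt B"])
  assume "K \<subseteq> J"
  show "(\<lambda>j. (norm (L j f))\<^sup>2) summable_on K" using fr[of f] summable_on_subset \<open>K \<subseteq> J\<close> by blast
  show "0 < sqrt B" using B0 by simp
  show "norm (sum (\<lambda>j. cadjoint (L j) (L j f)) F) \<le> sqrt B * sqrt (\<Sum>j\<in>F. (norm (L j f))\<^sup>2)"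
    if "finite F" "F \<subseteq> K" for F using ctrl that \<open>K \<subseteq> J\<close> by blast
qed simp


abbreviation "S \<equiv> g_frame_op J L"

lemma S_has: "((\<lambda>j. cadjoint (L j) (L j f)) has_sum S f) J"
  unfolding g_frame_op_def using summ[of J f] by simp

lemma S_inner: "cinner (S g) g = complex_of_real (\<Sum>\<^sub>\<infinity>j\<in>J. (norm (L j g))\<^sup>2)"
proof -
  have "((\<lambda>j. cinner (cadjoint (L j) (L j g)) g) has_sum cinner (S g) g) J"
    using has_sum_bounded_linear[OF bounded_linear_cinner_left S_has] .
  then have h1: "((\<lambda>j. complex_of_real ((norm (L j g))\<^sup>2)) has_sum cinner (S g) g) J"
    by (subst (asm) has_sum_cong[where g="\<lambda>j. complex_of_real ((norm (L j g))\<^sup>2)"])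
       (simp_all add: adj2 cinner_self)
  have h2: "((\<lambda>j. complex_of_real ((norm (L j g))\<^sup>2)) has_sum complex_of_real (\<Sum>\<^sub>\<infinity>j\<in>J. (norm (L j g))\<^sup>2)) J"
    using has_sum_bounded_linear[OF bounded_linear_of_real has_sum_infsum[OF conjunct1[OF fr[of g]]]] .
  show ?thesis using has_sum_unique[OF h1 h2] .
qed

lemma S_lower: "A * norm g \<le> norm (S g)"
proof -
  have "A * (norm g)\<^sup>2 \<le> (\<Sum>\<^sub>\<infinity>j\<in>J. (norm (L j g))\<^sup>2)" using fr[of g] by blast
  also have "\<dots> = cmod (cinner (S g) g)" unfolding S_inner norm_of_real
    by (simp add: infsum_nonneg)
  also have "\<dots> \<le> norm (S g) * norm g" by (rule cauchy_schwarz_c)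
  finally have *: "A * (norm g)\<^sup>2 \<le> norm (S g) * norm g" .
  show ?thesis
  proof (cases "g = 0")
    case True then show ?thesis by simp
  next
    case False then have "norm g > 0" by simp
    with * show ?thesis by (simp add: power2_eq_square mult.assoc[symmetric])
  qed
qed

lemma S_add: "S (x + y) = S x + S y"
proof -
  have "((\<lambda>j. cadjoint (L j) (L j x) + cadjoint (L j) (L j y)) has_sum (S x + S y)) J"
    by (intro has_sum_add S_has)
  then have "((\<lambda>j. cadjoint (L j) (L j (x + y))) has_sum (S x + S y)) J"
    by (subst has_sum_cong[where g="\<lambda>j. cadjoint (L j) (L j x) + cadjoint (L j) (L j y)"])
       (simp_all add: L_add Ls_add)
  then show ?thesis using has_sum_unique[OF S_has] by blast
qed

lemma S_scaleC: "S (scaleC c x) = scaleC c (S x)"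
proof -
  have "((\<lambda>j. scaleC c (cadjoint (L j) (L j x))) has_sum scaleC c (S x)) J"
    by (intro has_sum_bounded_linear[OF bounded_linear_scaleC] S_has)
  then have "((\<lambda>j. cadjoint (L j) (L j (scaleC c x))) has_sum scaleC c (S x)) J"
    by (subst has_sum_cong[where g="\<lambda>j. scaleC c (cadjoint (L j) (L j x))"])
       (simp_all add: L_scaleC Ls_scaleC)
  then show ?thesis using has_sum_unique[OF S_has] by blast
qed

lemma S_diff: "S (x - y) = S x - S y"
  using S_add[of "x - y" y] by (simp add: algebra_simps)

lemma S_upper: "norm (S g) \<le> B * norm g"
proof -
  have lim: "((\<lambda>F. norm (\<Sum>j\<in>F. cadjoint (L j) (L j g))) \<longlongrightarrow> norm (S g)) (finite_subsets_at_top J)"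
    using S_has unfolding has_sum_def by (rule tendsto_norm)
  have "eventually (\<lambda>F. norm (\<Sum>j\<in>F. cadjoint (L j) (L j g)) \<le> B * norm g) (finite_subsets_at_top J)"
  proof (rule eventually_finite_subsets_at_top_weakI)
    fix F assume F: "finite F" "F \<subseteq> J"
    have a: "norm (\<Sum>j\<in>F. cadjoint (L j) (L j g)) \<le> sqrt B * sqrt (\<Sum>j\<in>F. (norm (L j g))\<^sup>2)"
      by (rule ctrl[OF F])
    have b: "sqrt (\<Sum>j\<in>F. (norm (L j g))\<^sup>2) \<le> sqrt (B * (norm g)\<^sup>2)"
      using fsum_le[OF F] B0 by simp
    have c: "sqrt B * sqrt (\<Sum>j\<in>F. (norm (L j g))\<^sup>2) \<le> sqrt B * sqrt (B * (norm g)\<^sup>2)"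
      using b B0 by (intro mult_left_mono) auto
    have d: "sqrt B * sqrt (B * (norm g)\<^sup>2) = B * norm g" using B0
      by (simp add: real_sqrt_mult mult.assoc[symmetric])
    show "norm (\<Sum>j\<in>F. cadjoint (L j) (L j g)) \<le> B * norm g" using a c d by linarith
  qed
  then show ?thesis
    using tendsto_le[OF finite_subsets_at_top_neq_bot tendsto_const lim] by blast
qed

lemma S_bl: "bounded_linear S"
proof (rule bounded_linear_intro[where K=B])
  show "S (x + y) = S x + S y" for x y by (rule S_add)
  show "S (r *\<^sub>R x) = r *\<^sub>R S x" for r x by (simp add: scaleR_scaleC S_scaleC)
  show "norm (S x) \<le> norm x * B" for x using S_upper by (simp add: mult.commute)
qed

lemma S_range_closed:
  assumes lim: "(\<lambda>n. S (f n)) \<longlonglongrightarrow> l"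
  shows "l \<in> range S"
proof -
  have C: "Cauchy (\<lambda>n. S (f n))" using lim by (rule LIMSEQ_imp_Cauchy)
  have "Cauchy f"
  proof (rule CauchyI)
    fix e :: real assume "0 < e"
    then obtain M where M: "\<forall>m\<ge>M. \<forall>n\<ge>M. norm (S (f m) - S (f n)) < A * e"
      using CauchyD[OF C, of "A * e"] A0 by auto
    show "\<exists>M. \<forall>m\<ge>M. \<forall>n\<ge>M. norm (f m - f n) < e"
    proof (intro exI allI impI)
      fix m n assume "M \<le> m" "M \<le> n"
      have "A * norm (f m - f n) \<le> norm (S (f m - f n))" by (rule S_lower)
      also have "\<dots> < A * e" using M \<open>M \<le> m\<close> \<open>M \<le> n\<close> by (simp add: S_diff)
      finally show "norm (f m - f n) < e" using A0 by simp
    qed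
  qed
  then obtain g where g: "f \<longlonglongrightarrow> g" using Cauchy_convergent convergent_def by blast
  have "(\<lambda>n. S (f n)) \<longlonglongrightarrow> S g" using bounded_linear.tendsto[OF S_bl g] .
  then have "l = S g" using LIMSEQ_unique lim by blast
  then show ?thesis by simp
qed

lemma S_surj: "surj S"
proof -
  have "y \<in> range S" for y
  proof -
    define C where "C = range (\<lambda>x. y - S x)"
    have ne: "C \<noteq> {}" unfolding C_def by simp
    have cl: "closed C" unfolding closed_sequential_limits
    proof (intro allI impI)
      fix z l assume "(\<forall>n. z n \<in> C) \<and> z \<longlonglongrightarrow> l"
      then have "\<forall>n. \<exists>x. z n = y - S x" and zl: "z \<longlonglongrightarrow> l" unfolding C_def by auto
      then obtain f where zf: "\<forall>n. z n = y - S (f n)" using choice[of "\<lambda>n x. z n = y - S x"] by blast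
      have "(\<lambda>n. S (f n)) \<longlonglongrightarrow> y - l"
        using tendsto_diff[OF tendsto_const[of y] zl] by (simp add: zf)
      then obtain x where "y - l = S x" using S_range_closed by blast
      then show "l \<in> C" unfolding C_def by (auto intro!: image_eqI[where x=x] simp: algebra_simps)
    qed
    have mid: "(1/2) *\<^sub>R (a + b) \<in> C" if ab: "a \<in> C" "b \<in> C" for a b
    proof -
      obtain xa xb where "a = y - S xa" "b = y - S xb" using ab unfolding C_def by auto
      moreover have "S ((1/2) *\<^sub>R (xa + xb)) = (1/2) *\<^sub>R (S xa + S xb)"
        using S_bl[THEN bounded_linear.linear] by (simp add: linear_add linear_scale)
      ultimately have "(1/2) *\<^sub>R (a + b) = y - S ((1/2) *\<^sub>R (xa + xb))"
        by (simp only: half_mid)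
      then show ?thesis unfolding C_def by blast
    qed
    obtain z where zC: "z \<in> C" and zmin: "\<And>w. w\<in>C \<Longrightarrow> norm z \<le> norm w"
      using min_norm_exists[OF cl ne mid] by blast
    obtain x0 where x0: "z = y - S x0" using zC unfolding C_def by auto
    have "cinner (S z) z = 0"
    proof (rule min_orth)
      show "norm z \<le> norm (z + scaleC t (S z))" for t
      proof (rule zmin)
        have "z + scaleC t (S z) = y - S (x0 - scaleC t z)" by (simp add: x0 S_diff S_scaleC)
        then show "z + scaleC t (S z) \<in> C" unfolding C_def by blast
      qed
    qed
    then have "(\<Sum>\<^sub>\<infinity>j\<in>J. (norm (L j z))\<^sup>2) = 0" unfolding S_inner by simp
    then have "A * (norm z)\<^sup>2 \<le> 0" using fr[of z] by simp
    then have "z = 0" using A0 by (simp add: mult_le_0_iff)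
    then have "y = S x0" using x0 by simp
    then show ?thesis by simp
  qed
  then show ?thesis by blast
qed

end


theorem theorem3p1:
  fixes J I :: "int set"
    and Hs :: "int \<Rightarrow> 'b::chilbert_space set"
    and \<Lambda> :: "int \<Rightarrow> 'a::chilbert_space \<Rightarrow> 'b"
    and f :: 'a
  assumes "separable_set (UNIV :: 'a set)"
    and "\<forall>j\<in>J. closed_csubspace (Hs j) \<and> separable_set (Hs j)"
    and "\<forall>j\<in>J. bounded_clinear_op (\<Lambda> j) \<and> range (\<Lambda> j) \<subseteq> Hs j"
    and "g_frame J \<Lambda>"
    and "I \<subseteq> J"
  shows "(\<Sum>\<^sub>\<infinity>j\<in>I. cinner (g_dual J \<Lambda> j f) (\<Lambda> j f))
           - complex_of_real ((norm (g_partial_op J \<Lambda> I f))\<^sup>2)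
         = (\<Sum>\<^sub>\<infinity>j\<in>J - I. cnj (cinner (g_dual J \<Lambda> j f) (\<Lambda> j f)))
           - complex_of_real ((norm (g_partial_op J \<Lambda> (J - I) f))\<^sup>2)"
proof -
  obtain A B where AB: "0 < A" "A \<le> B" and fr: "\<forall>f. (\<lambda>j. (norm (\<Lambda> j f))\<^sup>2) summable_on J \<and>
          A * (norm f)\<^sup>2 \<le> (\<Sum>\<^sub>\<infinity>j\<in>J. (norm (\<Lambda> j f))\<^sup>2) \<and>
          (\<Sum>\<^sub>\<infinity>j\<in>J. (norm (\<Lambda> j f))\<^sup>2) \<le> B * (norm f)\<^sup>2"
    using assms(4) unfolding g_frame_def by blast
  interpret G: gfr J \<Lambda> A B
    using assms(3) AB fr by unfold_locales auto
  define g where "g = inv (g_frame_op J \<Lambda>) f"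
  have Sg: "g_frame_op J \<Lambda> g = f" unfolding g_def using G.S_surj by (rule surj_f_inv_f)
  have dual: "g_dual J \<Lambda> j f = \<Lambda> j g" for j unfolding g_dual_def g_def by simp
  define P where "P K = infsum (\<lambda>j. cadjoint (\<Lambda> j) (\<Lambda> j g)) K" for K
  have part: "g_partial_op J \<Lambda> K f = P K" for K unfolding g_partial_op_def P_def dual ..
  have hasP: "((\<lambda>j. cadjoint (\<Lambda> j) (\<Lambda> j g)) has_sum P K) K" if "K \<subseteq> J" for K
    unfolding P_def using G.summ[OF that] by simp
  have IJ: "I \<union> (J - I) = J" using assms(5) by blast
  have "((\<lambda>j. cadjoint (\<Lambda> j) (\<Lambda> j g)) has_sum (P I + P (J - I))) J"
    using has_sum_Un_disjoint[OF hasP[OF assms(5)] hasP[of "J - I"]] IJ by auto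
  then have sumf: "P I + P (J - I) = f" using has_sum_unique[OF _ G.S_has[of g]] Sg by blast
  have e1: "(\<Sum>\<^sub>\<infinity>j\<in>I. cinner (g_dual J \<Lambda> j f) (\<Lambda> j f)) = cinner (P I) f"
  proof (rule infsumI)
    have "((\<lambda>j. cinner (cadjoint (\<Lambda> j) (\<Lambda> j g)) f) has_sum cinner (P I) f) I"
      using has_sum_bounded_linear[OF bounded_linear_cinner_left hasP[OF assms(5)]] .
    then show "((\<lambda>j. cinner (g_dual J \<Lambda> j f) (\<Lambda> j f)) has_sum cinner (P I) f) I"
      by (subst (asm) has_sum_cong[where g="\<lambda>j. cinner (g_dual J \<Lambda> j f) (\<Lambda> j f)"])
         (use assms(5) in \<open>auto simp: dual G.adj2\<close>)
  qed
  have e2: "(\<Sum>\<^sub>\<infinity>j\<in>J - I. cnj (cinner (g_dual J \<Lambda> j f) (\<Lambda> j f))) = cinner f (P (J - I))"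
  proof (rule infsumI)
    have "((\<lambda>j. cinner f (cadjoint (\<Lambda> j) (\<Lambda> j g))) has_sum cinner f (P (J - I))) (J - I)"
      using has_sum_bounded_linear[OF bounded_linear_cinner_right hasP[of "J - I"]] by blast
    then show "((\<lambda>j. cnj (cinner (g_dual J \<Lambda> j f) (\<Lambda> j f))) has_sum cinner f (P (J - I))) (J - I)"
      by (subst (asm) has_sum_cong[where g="\<lambda>j. cnj (cinner (g_dual J \<Lambda> j f) (\<Lambda> j f))"])
         (auto simp: dual G.adj2[symmetric] cinner_commute[of f])
  qed
  show ?thesis
  proof -
    have l: "cinner (P I) f = cinner (P I) (P I) + cinner (P I) (P (J - I))"
      unfolding sumf[symmetric] by (rule cinner_add_right)
    have r: "cinner f (P (J - I)) = cinner (P I) (P (J - I)) + cinner (P (J - I)) (P (J - I))"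
      unfolding sumf[symmetric] by (rule cinner_add_left)
    show ?thesis unfolding e1 e2 part cinner_self[symmetric] unfolding l r by simp
  qed
qed

end
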